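(* For every $1<B<\infty$: if $d\ge2$ then $\lambda_d(B)>\theta_d(B)$; and for every $d\ge1$, $\lambda_d(B)\ge\theta_d\big(B^{(d+1)/2}\big)$.
   Context: Gauss map $T(x)=1/x-\lfloor1/x\rfloor$ ($T(0)=0$). Pressure: $\mathsf P(T,\phi)=\lim_{n\to\infty}\frac1n\log\sum_{(a_1,\dots,a_n)\in\mathbb N^n}\sup_{x\in[0,1)}e^{S_n\phi([a_1,\dots,a_n+x])}$, $S_n\phi=\sum_{i=0}^{n-1}\phi\circ T^i$, where $[a_1,\dots,a_n+x]$ is the finite continued fraction with last entry $a_n+x$. Functions $g_1(s)=s$, $g_n(s)=\frac{s g_{n-1}(s)}{1-s+ng_{n-1}(s)}$; $f_1(s)=s$, $f_{k+1}(s)=\frac{s f_k(s)}{1-s+f_k(s)}$. For $B>1$: $\lambda_d(B)=\inf\{s\ge0:\mathsf P(T,-s\log|T'|-g_d(s)\log B)\le0\}$ and $\theta_d(B)=\inf\{s\ge0:\mathsf P(T,-f_d(s)\log B-s\log|T'|)\le0\}$. (The number $\theta_d(B)$ is the Hausdorff dimension of the set of $x$ with $a_{n+1}(x)\cdots a_{n+d}(x)\ge B^n$ for infinitely many $n$.) *)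

theory Defs
  imports "HOL-Analysis.Analysis"
begin

definition gauss :: "real \<Rightarrow> real" where
  "gauss x = (if x = 0 then 0 else 1 / x - of_int \<lfloor>1 / x\<rfloor>)"

definition gauss_deriv :: "real \<Rightarrow> real" where
  "gauss_deriv x = - 1 / x\<^sup>2"

text \<open>Finite continued fraction [a_1,...,a_n + x]; cf [] x = x.\<close>
fun cf :: "nat list \<Rightarrow> real \<Rightarrow> real" where
  "cf [] x = x"
| "cf (a # ws) x = 1 / (real a + cf ws x)"

definition birkhoff :: "nat \<Rightarrow> (real \<Rightarrow> real) \<Rightarrow> real \<Rightarrow> real" where
  "birkhoff n \<phi> y = (\<Sum>i<n. \<phi> ((gauss ^^ i) y))"

definition ln_enn :: "ennreal \<Rightarrow> ereal" where
  "ln_enn z = (if z = 0 then MInfty else if z = top then PInfty else ereal (ln (enn2real z)))"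

definition words :: "nat \<Rightarrow> nat list set" where
  "words n = {ws. length ws = n \<and> (\<forall>a\<in>set ws. 1 \<le> a)}"

definition partition_fun :: "(real \<Rightarrow> real) \<Rightarrow> nat \<Rightarrow> ennreal" where
  "partition_fun \<phi> n =
     (\<integral>\<^sup>+ ws. (SUP x\<in>{0..<1}. ennreal (exp (birkhoff n \<phi> (cf ws x)))) \<partial>count_space (words n))"

definition pressure :: "(real \<Rightarrow> real) \<Rightarrow> ereal" where
  "pressure \<phi> = lim (\<lambda>n. ln_enn (partition_fun \<phi> n) / ereal (real n))"

text \<open>g_1(s) = s, g_n(s) = s g_{n-1}(s) / (1 - s + n g_{n-1}(s)) (g 0 is an unused dummy).\<close>
fun g :: "nat \<Rightarrow> real \<Rightarrow> real" where
  "g 0 s = 0"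
| "g (Suc 0) s = s"
| "g (Suc (Suc n)) s = s * g (Suc n) s / (1 - s + real (Suc (Suc n)) * g (Suc n) s)"

text \<open>f_1(s) = s, f_{k+1}(s) = s f_k(s) / (1 - s + f_k(s)) (f 0 is an unused dummy).\<close>
fun f :: "nat \<Rightarrow> real \<Rightarrow> real" where
  "f 0 s = 0"
| "f (Suc 0) s = s"
| "f (Suc (Suc k)) s = s * f (Suc k) s / (1 - s + f (Suc k) s)"

definition lambda_d :: "nat \<Rightarrow> real \<Rightarrow> real" where
  "lambda_d d B = Inf {s. 0 \<le> s \<and>
     pressure (\<lambda>x. - s * ln \<bar>gauss_deriv x\<bar> - g d s * ln B) \<le> 0}"

definition theta_d :: "nat \<Rightarrow> real \<Rightarrow> real" where
  "theta_d d B = Inf {s. 0 \<le> s \<and>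
     pressure (\<lambda>x. - f d s * ln B - s * ln \<bar>gauss_deriv x\<bar>) \<le> 0}"

end

theory Submission
  imports Defs
begin


fun qq :: "nat list \<Rightarrow> real \<Rightarrow> real" where
  "qq [] x = 1"
| "qq (a # w) x = real a * qq w x + (case w of [] \<Rightarrow> x | b # w' \<Rightarrow> qq w' x)"

definition pp :: "nat list \<Rightarrow> real \<Rightarrow> real" where
  "pp w x = (case w of [] \<Rightarrow> x | b # w' \<Rightarrow> qq w' x)"

lemma pp_simps[simp]: "pp [] x = x" "pp (b # w) x = qq w x"
  by (simp_all add: pp_def)

lemma qq_Cons: "qq (a # w) x = real a * qq w x + pp w x"
  by (simp add: pp_def)

declare qq.simps(2)[simp del]

definition pos :: "nat list \<Rightarrow> bool" where "pos w = (\<forall>a\<in>set w. 1 \<le> a)"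

lemma pos_simps[simp]: "pos []" "pos (a # w) \<longleftrightarrow> 1 \<le> a \<and> pos w"
  by (auto simp: pos_def)

lemma qq_pp_nonneg: "0 \<le> x \<Longrightarrow> pos w \<Longrightarrow> 1 \<le> qq w x \<and> 0 \<le> pp w x"
proof (induction w)
  case Nil then show ?case by simp
next
  case (Cons a w)
  then have "1 \<le> qq w x" "0 \<le> pp w x" "1 \<le> a" by auto
  moreover have "real a * qq w x \<ge> 1 * 1"
    using calculation by (intro mult_mono) auto
  ultimately show ?case by (simp add: qq_Cons)
qed

lemma cf_eq: "0 \<le> x \<Longrightarrow> pos w \<Longrightarrow> cf w x = pp w x / qq w x"
proof (induction w)
  case Nil then show ?case by simp
next
  case (Cons a w)
  then have q: "1 \<le> qq w x" "0 \<le> pp w x" using qq_pp_nonneg by auto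
  have "cf (a # w) x = 1 / (real a + pp w x / qq w x)" using Cons by simp
  also have "\<dots> = qq w x / (real a * qq w x + pp w x)"
    using q by (simp add: field_simps)
  finally show ?case by (simp add: qq_Cons)
qed

lemma cf_range: "0 \<le> x \<Longrightarrow> x < 1 \<Longrightarrow> pos w \<Longrightarrow> 0 \<le> cf w x \<and> cf w x \<le> 1 \<and> (cf w x = 1 \<longrightarrow> w = [1] \<and> x = 0) \<and> (w \<noteq> [] \<longrightarrow> 0 < cf w x)"
proof (induction w)
  case Nil then show ?case by simp
next
  case (Cons a w)
  then have t: "0 \<le> cf w x" "cf w x \<le> 1" "cf w x = 1 \<longrightarrow> w = [1] \<and> x = 0" "w \<noteq> [] \<longrightarrow> 0 < cf w x" "1 \<le> a" by auto
  have pos: "0 < real a + cf w x" using t by linarith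
  have le: "1 / (real a + cf w x) \<le> 1" using t by (simp add: field_simps)
  have eq1: "w = [] \<and> x = 0" if "1 / (real a + cf w x) = 1"
  proof -
    from that pos have "real a + cf w x = 1" by (simp add: field_simps)
    with t have "a = 1" "cf w x = 0" by linarith+
    then show ?thesis using t Cons.prems by (cases w) auto
  qed
  have "1 / (real a + cf w x) = 1 \<longrightarrow> a # w = [1] \<and> x = 0"
  proof
    assume h: "1 / (real a + cf w x) = 1"
    from h pos have "real a + cf w x = 1" by (simp add: field_simps)
    with t have "a = 1" by linarith
    with eq1 h show "a # w = [1] \<and> x = 0" by simp
  qed
  then show ?case using pos le by simp
qed

lemma prod_cf: "0 \<le> x \<Longrightarrow> pos w \<Longrightarrow> (\<Prod>i<length w. cf (drop i w) x) = 1 / qq w x"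
proof (induction w)
  case Nil then show ?case by simp
next
  case (Cons a w)
  then have q: "1 \<le> qq w x" "0 \<le> pp w x" "1 \<le> qq (a#w) x" using qq_pp_nonneg[of x] by auto
  have "(\<Prod>i<length (a#w). cf (drop i (a#w)) x) = cf (a#w) x * (\<Prod>i<length w. cf (drop i w) x)"
    unfolding length_Cons prod.lessThan_Suc_shift by simp
  also have "\<dots> = qq w x / qq (a#w) x * (1 / qq w x)"
    using Cons by (simp add: cf_eq[of x "a#w"] del: cf.simps)
  also have "\<dots> = 1 / qq (a#w) x" using q by simp
  finally show ?case .
qed

lemma gauss_cf: "0 \<le> t \<Longrightarrow> t < 1 \<Longrightarrow> 1 \<le> a \<Longrightarrow> gauss (1 / (real a + t)) = t"
proof -
  assume h: "0 \<le> t" "t < 1" "1 \<le> a"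
  then have "0 < real a + t" by linarith
  then have "1 / (1 / (real a + t)) = real a + t" by simp
  moreover have "\<lfloor>real a + t\<rfloor> = int a" using h by (intro floor_unique) auto
  ultimately show ?thesis using h unfolding gauss_def by auto
qed

lemma ln_orbit: "0 \<le> x \<Longrightarrow> x < 1 \<Longrightarrow> pos w \<Longrightarrow> i < length w \<Longrightarrow>
   ln ((gauss ^^ i) (cf w x)) = ln (cf (drop i w) x)"
proof (induction w arbitrary: i)
  case Nil then show ?case by simp
next
  case (Cons a w)
  show ?case
  proof (cases i)
    case 0 then show ?thesis by simp
  next
    case (Suc j)
    have r: "0 \<le> cf w x" "cf w x \<le> 1" "cf w x = 1 \<longrightarrow> w = [1] \<and> x = 0" and a: "1 \<le> a"
      using cf_range[of x w] Cons.prems by auto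
    show ?thesis
    proof (cases "cf w x = 1")
      case False
      then have "gauss (cf (a#w) x) = cf w x" using r a by (simp add: gauss_cf)
      then show ?thesis using Cons Suc by (simp add: funpow_Suc_right del: funpow.simps)
    next
      case True
      then have w: "w = [1]" "x = 0" using r by auto
      then have j: "j = 0" using Cons.prems Suc by simp
      have "gauss (cf (a#w) x) = 0"
      proof -
        have "cf (a#w) x = 1 / (real a + 1)" using w by simp
        moreover have "1 / (1 / (real a + 1)) = real a + 1" by simp
        moreover have "\<lfloor>real a + 1\<rfloor> = int a + 1" by (metis floor_of_nat of_int_of_nat_eq of_nat_1 of_nat_add floor_of_int of_int_add)
        ultimately show ?thesis unfolding gauss_def by simp
      qed
      then show ?thesis using Suc j w by (simp add: funpow_Suc_right del: funpow.simps)
    qed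
  qed
qed

lemma ln_gd: "0 \<le> z \<Longrightarrow> ln \<bar>gauss_deriv z\<bar> = - 2 * ln z"
  by (cases "z = 0") (simp_all add: gauss_deriv_def ln_div ln_realpow)



lemma gauss_nonneg: "0 \<le> gauss x"
proof -
  have "of_int \<lfloor>1/x\<rfloor> \<le> 1/x" by (rule of_int_floor_le)
  then show ?thesis unfolding gauss_def by auto
qed

lemma iter_nonneg: "0 \<le> y \<Longrightarrow> 0 \<le> (gauss ^^ i) y"
  by (cases i) (simp_all add: gauss_nonneg del: funpow.simps, simp add: gauss_nonneg)

lemma birkhoff_cf:
  assumes x: "0 \<le> x" "x < 1" and w: "pos w"
  shows "exp (birkhoff (length w) (\<lambda>z. - s * ln \<bar>gauss_deriv z\<bar> - c) (cf w x))
         = exp (- c * real (length w)) * qq w x powr (- 2 * s)"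
proof -
  let ?n = "length w"
  have y: "0 \<le> cf w x" using cf_range[OF x w] by simp
  have cfpos: "0 < cf (drop i w) x" if "i < ?n" for i
  proof -
    have "pos (drop i w)" using w by (auto simp: pos_def dest: in_set_dropD)
    moreover have "drop i w \<noteq> []" using that by simp
    ultimately show ?thesis using cf_range[OF x] by blast
  qed
  have "birkhoff ?n (\<lambda>z. - s * ln \<bar>gauss_deriv z\<bar> - c) (cf w x)
      = (\<Sum>i<?n. 2 * s * ln (cf (drop i w) x) - c)"
    unfolding birkhoff_def
  proof (rule sum.cong)
    fix i assume "i \<in> {..<?n}"
    then have "ln ((gauss ^^ i) (cf w x)) = ln (cf (drop i w) x)"
      using ln_orbit[OF x w] by simp
    then show "- s * ln \<bar>gauss_deriv ((gauss ^^ i) (cf w x))\<bar> - c = 2 * s * ln (cf (drop i w) x) - c"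
      using ln_gd[OF iter_nonneg[OF y]] by simp
  qed simp
  also have "\<dots> = 2 * s * (\<Sum>i<?n. ln (cf (drop i w) x)) - c * ?n"
    by (simp add: sum_subtractf sum_distrib_left)
  also have "(\<Sum>i<?n. ln (cf (drop i w) x)) = ln (\<Prod>i<?n. cf (drop i w) x)"
    using cfpos by (subst ln_prod) (force+)
  also have "\<dots> = - ln (qq w x)"
    using prod_cf[OF x(1) w] qq_pp_nonneg[OF x(1) w] by (simp add: ln_div)
  finally have "birkhoff ?n (\<lambda>z. - s * ln \<bar>gauss_deriv z\<bar> - c) (cf w x) = - c * ?n + (- 2 * s) * ln (qq w x)"
    by simp
  moreover have "0 < qq w x" using qq_pp_nonneg[OF x(1) w] by simp
  ultimately show ?thesis by (simp add: powr_def flip: exp_add)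
qed

lemma qq_affine: "qq w x = qq w 0 + x * (qq w 1 - qq w 0) \<and> pp w x = pp w 0 + x * (pp w 1 - pp w 0)"
proof (induction w)
  case Nil then show ?case by simp
next
  case (Cons a w)
  then have e1: "qq w x = qq w 0 + x * (qq w 1 - qq w 0)" and e2: "pp w x = pp w 0 + x * (pp w 1 - pp w 0)" by auto
  show ?case unfolding qq_Cons pp_simps e1 e2 by (simp add: algebra_simps)
qed

lemma qq_diff_bounds: "pos w \<Longrightarrow> 0 \<le> qq w 1 - qq w 0 \<and> 0 \<le> pp w 1 - pp w 0 \<and> qq w 1 - qq w 0 \<le> qq w 0
   \<and> (qq w 1 - qq w 0) + (pp w 1 - pp w 0) \<le> qq w 0 + pp w 0"
proof (induction w)
  case Nil then show ?case by simp
next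
  case (Cons a w)
  then have h: "0 \<le> qq w 1 - qq w 0" "0 \<le> pp w 1 - pp w 0" "qq w 1 - qq w 0 \<le> qq w 0"
    "(qq w 1 - qq w 0) + (pp w 1 - pp w 0) \<le> qq w 0 + pp w 0" "1 \<le> a" by auto
  have m: "(real a - 1) * (qq w 1 - qq w 0) \<le> (real a - 1) * qq w 0"
    using h by (intro mult_left_mono) auto
  have m2: "real a * qq w 0 \<le> real a * qq w 1" using h by simp
  have m': "real a * qq w 1 - real a * qq w 0 - qq w 1 + qq w 0 \<le> real a * qq w 0 - qq w 0"
    using m by (simp add: algebra_simps)
  show ?case unfolding qq_Cons pp_simps using h m' m2 by linarith
qed

lemma qq_bounds: "pos w \<Longrightarrow> 0 \<le> x \<Longrightarrow> x \<le> 1 \<Longrightarrow> qq w 0 \<le> qq w x \<and> qq w x \<le> 2 * qq w 0"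
proof -
  assume h: "pos w" "0 \<le> x" "x \<le> 1"
  have a: "qq w x = qq w 0 + x * (qq w 1 - qq w 0)" using qq_affine by blast
  have b: "0 \<le> qq w 1 - qq w 0" "qq w 1 - qq w 0 \<le> qq w 0" using qq_diff_bounds[OF h(1)] by auto
  have "x * (qq w 1 - qq w 0) \<le> 1 * qq w 0" using h b by (intro mult_mono) auto
  moreover have "0 \<le> x * (qq w 1 - qq w 0)" using h b by simp
  ultimately show ?thesis using a by simp
qed

lemma qq_append: "pos v \<Longrightarrow> 0 \<le> x \<Longrightarrow> qq (u @ v) x = qq u (cf v x) * qq v x \<and> pp (u @ v) x = pp u (cf v x) * qq v x"
proof (induction u)
  case Nil
  then have "0 < qq v x" using qq_pp_nonneg by fastforce
  then show ?case using cf_eq[OF Nil(2) Nil(1)] by simp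
next
  case (Cons a u)
  then show ?case by (simp add: qq_Cons algebra_simps)
qed

lemma pos_append[simp]: "pos (u @ v) \<longleftrightarrow> pos u \<and> pos v"
  by (auto simp: pos_def)

lemma qq_append_bounds:
  assumes "pos u" "pos v"
  shows "qq u 0 * qq v 0 \<le> qq (u @ v) 0 \<and> qq (u @ v) 0 \<le> 2 * (qq u 0 * qq v 0)"
proof -
  let ?t = "cf v 0"
  have t: "0 \<le> ?t" "?t \<le> 1" using cf_range[of 0 v] assms by auto
  have e: "qq (u @ v) 0 = qq u ?t * qq v 0" using qq_append[OF assms(2)] by simp
  have b: "qq u 0 \<le> qq u ?t" "qq u ?t \<le> 2 * qq u 0" using qq_bounds[OF assms(1) t] by auto
  have q: "1 \<le> qq v 0" using qq_pp_nonneg[OF _ assms(2)] by simp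
  show ?thesis unfolding e using b q by (auto intro: mult_right_mono)
qed



definition W :: "nat \<Rightarrow> real \<Rightarrow> ennreal" where
  "W n s = (\<integral>\<^sup>+ w. ennreal (qq w 0 powr (- 2 * s)) \<partial>count_space (words n))"

lemma words_pos: "w \<in> words n \<Longrightarrow> pos w \<and> length w = n"
  by (auto simp: words_def pos_def)

lemma qq0_ge1: "pos w \<Longrightarrow> 1 \<le> qq w 0"
  using qq_pp_nonneg[of 0 w] by simp

lemma sup_eq:
  assumes w: "w \<in> words n" and s: "0 \<le> s"
  shows "(SUP x\<in>{0..<1}. ennreal (exp (birkhoff n (\<lambda>z. - s * ln \<bar>gauss_deriv z\<bar> - c) (cf w x))))
       = ennreal (exp (- c * real n)) * ennreal (qq w 0 powr (- 2 * s))"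
proof -
  have pw: "pos w" and n: "length w = n" using words_pos[OF w] by auto
  have e: "exp (birkhoff n (\<lambda>z. - s * ln \<bar>gauss_deriv z\<bar> - c) (cf w x))
         = exp (- c * real n) * qq w x powr (- 2 * s)" if "x \<in> {0..<1}" for x
    using birkhoff_cf[of x w s c] that pw n by auto
  have q0: "0 < qq w 0" using qq0_ge1[OF pw] by simp
  have "(SUP x\<in>{0..<1}. ennreal (exp (birkhoff n (\<lambda>z. - s * ln \<bar>gauss_deriv z\<bar> - c) (cf w x))))
      = ennreal (exp (- c * real n) * qq w 0 powr (- 2 * s))"
  proof (rule antisym)
    show "(SUP x\<in>{0..<1}. ennreal (exp (birkhoff n (\<lambda>z. - s * ln \<bar>gauss_deriv z\<bar> - c) (cf w x))))
      \<le> ennreal (exp (- c * real n) * qq w 0 powr (- 2 * s))"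
    proof (rule SUP_least)
      fix x :: real assume x: "x \<in> {0..<1}"
      have "qq w 0 \<le> qq w x" using qq_bounds[OF pw, of x] x by auto
      then have "qq w x powr (- 2 * s) \<le> qq w 0 powr (- 2 * s)"
        using q0 s by (intro powr_mono2') auto
      then show "ennreal (exp (birkhoff n (\<lambda>z. - s * ln \<bar>gauss_deriv z\<bar> - c) (cf w x)))
            \<le> ennreal (exp (- c * real n) * qq w 0 powr (- 2 * s))"
        unfolding e[OF x] by (intro ennreal_leI mult_left_mono) auto
    qed
  next
    show "ennreal (exp (- c * real n) * qq w 0 powr (- 2 * s))
       \<le> (SUP x\<in>{0..<1}. ennreal (exp (birkhoff n (\<lambda>z. - s * ln \<bar>gauss_deriv z\<bar> - c) (cf w x))))"
      using e[of 0] by (intro SUP_upper2[of 0]) auto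
  qed
  then show ?thesis by (simp add: ennreal_mult)
qed

lemma partition_W:
  assumes s: "0 \<le> s"
  shows "partition_fun (\<lambda>z. - s * ln \<bar>gauss_deriv z\<bar> - c) n = ennreal (exp (- c * real n)) * W n s"
proof -
  have "partition_fun (\<lambda>z. - s * ln \<bar>gauss_deriv z\<bar> - c) n
     = (\<integral>\<^sup>+ w. ennreal (exp (- c * real n)) * ennreal (qq w 0 powr (- 2 * s)) \<partial>count_space (words n))"
    unfolding partition_fun_def by (intro nn_integral_cong) (rule sup_eq[OF _ s], simp)
  also have "\<dots> = ennreal (exp (- c * real n)) * W n s"
    unfolding W_def by (rule nn_integral_cmult) simp
  finally show ?thesis .
qed

lemma words_bij: "bij_betw (\<lambda>(u, v). u @ v) (words n \<times> words m) (words (n + m))"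
proof (rule bij_betwI')
  fix x y assume xy: "x \<in> words n \<times> words m" "y \<in> words n \<times> words m"
  obtain u1 v1 u2 v2 where x: "x = (u1, v1)" and y: "y = (u2, v2)" by (cases x, cases y) auto
  have "length u1 = length u2" using xy x y by (simp add: words_def)
  then show "((case x of (u, v) \<Rightarrow> u @ v) = (case y of (u, v) \<Rightarrow> u @ v)) = (x = y)"
    unfolding x y by (simp only: prod.case prod.inject) (metis append_eq_append_conv)
next
  fix x assume "x \<in> words n \<times> words m"
  then show "(case x of (u, v) \<Rightarrow> u @ v) \<in> words (n + m)" by (auto simp: words_def)
next
  fix w assume "w \<in> words (n + m)"
  then show "\<exists>x\<in>words n \<times> words m. w = (case x of (u, v) \<Rightarrow> u @ v)"
    by (intro bexI[of _ "(take n w, drop n w)"]) (auto simp: words_def dest: in_set_takeD in_set_dropD)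
qed

lemma W_split:
  "(\<integral>\<^sup>+w. h w \<partial>count_space (words (n+m))) = (\<integral>\<^sup>+u. \<integral>\<^sup>+v. h (u@v) \<partial>count_space (words m) \<partial>count_space (words n))"
proof -
  have c: "countable (words k)" for k by simp
  interpret M: sigma_finite_measure "count_space (words m)"
    by (rule sigma_finite_measure_count_space_countable) simp
  have "(\<integral>\<^sup>+w. h w \<partial>count_space (words (n+m))) = (\<integral>\<^sup>+z. h (case z of (u, v) \<Rightarrow> u @ v) \<partial>count_space (words n \<times> words m))"
    by (rule nn_integral_bij_count_space[OF words_bij, symmetric])
  also have "\<dots> = (\<integral>\<^sup>+z. h (case z of (u, v) \<Rightarrow> u @ v) \<partial>(count_space (words n) \<Otimes>\<^sub>M count_space (words m)))"
    by (simp add: pair_measure_countable)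
  also have "\<dots> = (\<integral>\<^sup>+u. \<integral>\<^sup>+v. h (u@v) \<partial>count_space (words m) \<partial>count_space (words n))"
    by (subst M.nn_integral_fst[symmetric]) (simp_all add: pair_measure_countable)
  finally show ?thesis .
qed

lemma W_mult_le: assumes s: "0 \<le> s" shows "W (n + m) s \<le> W n s * W m s"
proof -
  have "W (n + m) s = (\<integral>\<^sup>+u. \<integral>\<^sup>+v. ennreal (qq (u@v) 0 powr (- 2 * s)) \<partial>count_space (words m) \<partial>count_space (words n))"
    unfolding W_def by (rule W_split)
  also have "\<dots> \<le> (\<integral>\<^sup>+u. \<integral>\<^sup>+v. ennreal (qq u 0 powr (- 2 * s)) * ennreal (qq v 0 powr (- 2 * s)) \<partial>count_space (words m) \<partial>count_space (words n))"
  proof (intro nn_integral_mono)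
    fix u v assume u: "u \<in> space (count_space (words n))" and v: "v \<in> space (count_space (words m))"
    have pu: "pos u" and pv: "pos v" using u v words_pos by auto
    have b: "qq u 0 * qq v 0 \<le> qq (u @ v) 0" using qq_append_bounds[OF pu pv] by simp
    have p: "0 < qq u 0 * qq v 0" using qq0_ge1[OF pu] qq0_ge1[OF pv] by simp
    have "qq (u @ v) 0 powr (- 2 * s) \<le> (qq u 0 * qq v 0) powr (- 2 * s)"
      using b p s by (intro powr_mono2') auto
    also have "\<dots> = qq u 0 powr (- 2 * s) * qq v 0 powr (- 2 * s)"
      using p qq0_ge1[OF pu] qq0_ge1[OF pv] by (simp add: powr_mult)
    finally have "ennreal (qq (u @ v) 0 powr (- 2 * s)) \<le> ennreal (qq u 0 powr (- 2 * s) * qq v 0 powr (- 2 * s))"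
      by (rule ennreal_leI)
    then show "ennreal (qq (u @ v) 0 powr (- 2 * s)) \<le> ennreal (qq u 0 powr (- 2 * s)) * ennreal (qq v 0 powr (- 2 * s))"
      by (simp add: ennreal_mult)
  qed
  also have "\<dots> = W n s * W m s"
    unfolding W_def by (simp add: nn_integral_cmult nn_integral_multc)
  finally show ?thesis .
qed

lemma W_mult_ge: assumes s: "0 \<le> s" shows "ennreal (2 powr (- 2 * s)) * (W n s * W m s) \<le> W (n + m) s"
proof -
  have "ennreal (2 powr (- 2 * s)) * (W n s * W m s) = (\<integral>\<^sup>+u. \<integral>\<^sup>+v. ennreal (2 powr (- 2 * s)) * ennreal (qq u 0 powr (- 2 * s)) * ennreal (qq v 0 powr (- 2 * s)) \<partial>count_space (words m) \<partial>count_space (words n))"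
    unfolding W_def by (simp add: nn_integral_cmult nn_integral_multc mult.assoc)
  also have "\<dots> \<le> (\<integral>\<^sup>+u. \<integral>\<^sup>+v. ennreal (qq (u@v) 0 powr (- 2 * s)) \<partial>count_space (words m) \<partial>count_space (words n))"
  proof (intro nn_integral_mono)
    fix u v assume u: "u \<in> space (count_space (words n))" and v: "v \<in> space (count_space (words m))"
    have pu: "pos u" and pv: "pos v" using u v words_pos by auto
    have b: "qq (u @ v) 0 \<le> 2 * (qq u 0 * qq v 0)" using qq_append_bounds[OF pu pv] by simp
    have p: "0 < qq (u @ v) 0" using qq0_ge1[of "u@v"] pu pv by simp
    have "(2 * (qq u 0 * qq v 0)) powr (- 2 * s) \<le> qq (u @ v) 0 powr (- 2 * s)"
      using b p s by (intro powr_mono2') auto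
    moreover have "(2 * (qq u 0 * qq v 0)) powr (- 2 * s) = 2 powr (- 2 * s) * qq u 0 powr (- 2 * s) * qq v 0 powr (- 2 * s)"
      using qq0_ge1[OF pu] qq0_ge1[OF pv] by (simp add: powr_mult)
    ultimately have "ennreal (2 powr (- 2 * s) * qq u 0 powr (- 2 * s) * qq v 0 powr (- 2 * s)) \<le> ennreal (qq (u @ v) 0 powr (- 2 * s))"
      by (intro ennreal_leI) simp
    then show "ennreal (2 powr (- 2 * s)) * ennreal (qq u 0 powr (- 2 * s)) * ennreal (qq v 0 powr (- 2 * s)) \<le> ennreal (qq (u @ v) 0 powr (- 2 * s))"
      by (simp add: ennreal_mult)
  qed
  also have "\<dots> = W (n + m) s"
    unfolding W_def by (rule W_split[symmetric])
  finally show ?thesis .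
qed

lemma W_0: "W 0 s = 1"
proof -
  have "words 0 = {[]}" by (auto simp: words_def)
  then show ?thesis unfolding W_def by (simp add: nn_integral_count_space_finite)
qed

lemma W_1: "W 1 s = (\<Sum>k. ennreal (real (Suc k) powr (- 2 * s)))"
proof -
  have b: "bij_betw (\<lambda>k. [Suc k]) UNIV (words 1)"
  proof (rule bij_betwI')
    fix w assume "w \<in> words 1"
    then obtain a where "w = [a]" "1 \<le> a" by (auto simp: words_def length_Suc_conv)
    then show "\<exists>k\<in>UNIV. w = [Suc k]" by (intro bexI[of _ "a - 1"]) auto
  qed (auto simp: words_def)
  have "W 1 s = (\<integral>\<^sup>+k. ennreal (qq [Suc k] 0 powr (- 2 * s)) \<partial>count_space UNIV)"
    unfolding W_def by (rule nn_integral_bij_count_space[OF b, symmetric])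
  also have "\<dots> = (\<Sum>k. ennreal (real (Suc k) powr (- 2 * s)))"
    by (simp add: nn_integral_count_space_nat qq_Cons)
  finally show ?thesis .
qed



lemma kfold:
  fixes b :: "nat \<Rightarrow> real"
  assumes sub: "\<And>n m. b (n + m) \<le> b n + b m" and sup: "\<And>n m. b n + b m - K \<le> b (n + m)"
  shows "b (Suc k * n) \<le> real (Suc k) * b n \<and> real (Suc k) * b n - real (Suc k) * K \<le> b (Suc k * n)"
proof (induction k)
  case 0 then show ?case using sup[of n 0] sub[of n 0] by (simp add: algebra_simps)
next
  case (Suc k)
  have e: "Suc (Suc k) * n = n + Suc k * n" by simp
  show ?case unfolding e using Suc sub[of n "Suc k * n"] sup[of n "Suc k * n"]
    by (simp add: algebra_simps)
qed

lemma subsuper_conv: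
  fixes b :: "nat \<Rightarrow> real"
  assumes sub: "\<And>n m. b (n + m) \<le> b n + b m" and sup: "\<And>n m. b n + b m - K \<le> b (n + m)"
    and K: "0 \<le> K"
  shows "convergent (\<lambda>n. b n / real n) \<and> b 1 - K \<le> lim (\<lambda>n. b n / real n) \<and> lim (\<lambda>n. b n / real n) \<le> b 1"
proof -
  let ?X = "\<lambda>n. b n / real n"
  have close: "\<bar>b (k * n) / real (k * n) - b n / real n\<bar> \<le> K / real n" if kn: "1 \<le> k" "1 \<le> n" for k n
  proof -
    obtain j where k: "k = Suc j" using kn by (cases k) auto
    have h: "b (k * n) \<le> real k * b n" "real k * b n - real k * K \<le> b (k * n)"
      using kfold[OF sub sup, of j n] k by auto
    have kp: "0 < real k" "0 < real n" using kn by auto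
    have "b (k * n) / real (k * n) \<le> b n / real n"
      using h(1) kp by (simp add: field_simps)
    moreover have "b n / real n - K / real n \<le> b (k * n) / real (k * n)"
    proof -
      have "real k * (b n - K) \<le> b (k*n)" using h(2) by (simp add: algebra_simps)
      then have "real k * (b n - K) / real (k*n) \<le> b (k*n) / real (k*n)" by (intro divide_right_mono) auto
      moreover have "real k * (b n - K) / real (k*n) = b n / real n - K / real n" using kp by (simp add: field_simps)
      ultimately show ?thesis by simp
    qed
    ultimately show ?thesis by (simp add: abs_le_iff diff_divide_distrib)
  qed
  have "Cauchy ?X"
  proof (rule CauchyI)
    fix e :: real assume e: "0 < e"
    define M where "M = nat \<lceil>2 * K / e\<rceil> + 1"
    have M1: "1 \<le> M" unfolding M_def by simp
    have KM: "2 * K / e < real M" unfolding M_def by linarith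
    then have KM': "K / real M < e / 2" using e M1 by (simp add: field_simps)
    show "\<exists>M. \<forall>m\<ge>M. \<forall>n\<ge>M. norm (?X m - ?X n) < e"
    proof (intro exI allI impI)
      fix m n assume mn: "M \<le> m" "M \<le> n"
      then have mn1: "1 \<le> m" "1 \<le> n" using M1 by auto
      have a: "\<bar>?X (n * m) - ?X m\<bar> \<le> K / real m" using close[of n m] mn1 by simp
      have c: "\<bar>?X (m * n) - ?X n\<bar> \<le> K / real n" using close[of m n] mn1 by simp
      have "K / real m \<le> K / real M" using K mn M1 by (intro divide_left_mono) auto
      moreover have "K / real n \<le> K / real M" using K mn M1 by (intro divide_left_mono) auto
      moreover have "m * n = n * m" by simp
      ultimately have a': "\<bar>?X (m * n) - ?X m\<bar> \<le> K / real M" and c': "\<bar>?X (m * n) - ?X n\<bar> \<le> K / real M"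
        using a c by (metis order_trans)+
      have "norm (?X m - ?X n) \<le> K / real M + K / real M"
        unfolding real_norm_def using a' c' by linarith
      then show "norm (?X m - ?X n) < e" using KM' by linarith
    qed
  qed
  then have conv: "convergent ?X" by (rule Cauchy_convergent)
  then have lim: "?X \<longlonglongrightarrow> lim ?X" by (rule convergent_LIMSEQ_iff[THEN iffD1])
  have bnd: "b 1 - K \<le> ?X n \<and> ?X n \<le> b 1" if n1: "1 \<le> n" for n
  proof -
    obtain j where k: "n = Suc j" using n1 by (cases n) auto
    have h: "b n \<le> real n * b 1" "real n * b 1 - real n * K \<le> b n"
      using kfold[OF sub sup, of j 1] k by auto
    have np: "0 < real n" using n1 by auto
    show ?thesis using h np by (simp add: field_simps)
  qed
  have "b 1 - K \<le> lim ?X" using bnd by (intro LIMSEQ_le_const[OF lim]) auto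
  moreover have "lim ?X \<le> b 1" using bnd by (intro LIMSEQ_le_const2[OF lim]) auto
  ultimately show ?thesis using conv by simp
qed



lemma W1_ge1: "1 \<le> W 1 s"
proof -
  have "\<not> (\<Sum>k. ennreal (real (Suc k) powr (- 2 * s))) < ennreal (real (Suc 0) powr (- 2 * s))"
    using ennreal_suminf_lessD[of "\<lambda>k. ennreal (real (Suc k) powr (- 2 * s))" _ 0] by auto
  then show ?thesis unfolding W_1 by (simp add: not_less)
qed

lemma W_pos: "0 \<le> s \<Longrightarrow> 0 < W n s"
proof (induction n)
  case 0 then show ?case by (simp add: W_0)
next
  case (Suc n)
  have w1: "0 < W 1 s" using W1_ge1[of s] by (rule less_le_trans[OF zero_less_one])
  have "0 < ennreal (2 powr (- 2 * s)) * (W n s * W 1 s)"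
    using Suc w1 by (simp add: ennreal_zero_less_mult_iff)
  also have "\<dots> \<le> W (n + 1) s" by (rule W_mult_ge[OF Suc.prems])
  finally show ?case by simp
qed

lemma summable_Suc_powr: "summable (\<lambda>k. real (Suc k) powr (- 2 * s)) \<longleftrightarrow> 1/2 < s"
proof -
  have "summable (\<lambda>k. real (Suc k) powr (- 2 * s)) \<longleftrightarrow> summable (\<lambda>k. real k powr (- 2 * s))"
    using summable_Suc_iff[of "\<lambda>k. real k powr (- 2 * s)"] by simp
  also have "\<dots> \<longleftrightarrow> - 2 * s < -1" by (rule summable_real_powr_iff)
  finally show ?thesis by auto
qed

lemma W1_top: "s \<le> 1/2 \<Longrightarrow> W 1 s = top"
proof (rule ccontr)
  assume s: "s \<le> 1/2" and "W 1 s \<noteq> top"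
  then have "summable (\<lambda>k. real (Suc k) powr (- 2 * s))"
    unfolding W_1 by (intro summable_suminf_not_top) auto
  then show False using s summable_Suc_powr by auto
qed

lemma W_top: "0 \<le> s \<Longrightarrow> s \<le> 1/2 \<Longrightarrow> 1 \<le> n \<Longrightarrow> W n s = top"
proof (induction n)
  case 0 then show ?case by simp
next
  case (Suc n)
  show ?case
  proof (cases n)
    case 0 then show ?thesis using W1_top Suc by simp
  next
    case (Suc k)
    then have "W n s = top" using Suc.IH Suc.prems by simp
    then have "ennreal (2 powr (- 2 * s)) * (W n s * W 1 s) = top"
      using W1_top[OF Suc.prems(2)] by simp
    moreover have "ennreal (2 powr (- 2 * s)) * (W n s * W 1 s) \<le> W (n + 1) s" by (rule W_mult_ge[OF Suc.prems(1)])
    ultimately show ?thesis by (simp add: top_unique)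
  qed
qed

lemma W_fin: "1/2 < s \<Longrightarrow> W n s < top"
proof (induction n)
  case 0 then show ?case by (simp add: W_0)
next
  case (Suc n)
  have sm: "summable (\<lambda>k. real (Suc k) powr (- 2 * s))" using Suc.prems summable_Suc_powr by blast
  have "W 1 s \<noteq> top"
    unfolding W_1 by (rule ennreal_suminf_neq_top[OF sm]) simp
  then have "W 1 s < top" by (simp add: less_top)
  then have "W n s * W 1 s < top" using Suc by (simp add: ennreal_mult_less_top)
  moreover have "W (n + 1) s \<le> W n s * W 1 s" using W_mult_le[of s n 1] Suc.prems by simp
  ultimately show ?case by simp
qed

definition bb :: "nat \<Rightarrow> real \<Rightarrow> real" where "bb n s = ln (enn2real (W n s))"

lemma W_real: assumes "1/2 < s" shows "W n s = ennreal (enn2real (W n s)) \<and> 0 < enn2real (W n s)"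
proof -
  have "W n s < top" "0 < W n s" using W_fin[OF assms] W_pos[of s n] assms by auto
  then show ?thesis by (cases "W n s") (auto simp: enn2real_positive_iff)
qed

lemma bb_sub: assumes s: "1/2 < s" shows "bb (n + m) s \<le> bb n s + bb m s"
proof -
  have "enn2real (W (n + m) s) \<le> enn2real (W n s * W m s)"
    using W_mult_le[of s n m] s W_fin[OF s] by (intro enn2real_mono) (auto simp: ennreal_mult_less_top)
  then have "enn2real (W (n + m) s) \<le> enn2real (W n s) * enn2real (W m s)" by (simp add: enn2real_mult)
  moreover have p: "0 < enn2real (W n s)" "0 < enn2real (W m s)" "0 < enn2real (W (n+m) s)" using W_real[OF s] by auto
  ultimately have "ln (enn2real (W (n + m) s)) \<le> ln (enn2real (W n s) * enn2real (W m s))"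
    by (subst ln_le_cancel_iff) auto
  then show ?thesis unfolding bb_def using p by (simp add: ln_mult)
qed

lemma bb_sup: assumes s: "1/2 < s" shows "bb n s + bb m s - 2 * s * ln 2 \<le> bb (n + m) s"
proof -
  have "enn2real (ennreal (2 powr (- 2 * s)) * (W n s * W m s)) \<le> enn2real (W (n + m) s)"
    using W_mult_ge[of s n m] s W_fin[OF s] by (intro enn2real_mono) auto
  then have le: "2 powr (- 2 * s) * (enn2real (W n s) * enn2real (W m s)) \<le> enn2real (W (n + m) s)"
    by (simp add: enn2real_mult)
  have p: "0 < enn2real (W n s)" "0 < enn2real (W m s)" "0 < enn2real (W (n+m) s)" using W_real[OF s] by auto
  have "ln (2 powr (- 2 * s) * (enn2real (W n s) * enn2real (W m s))) \<le> ln (enn2real (W (n + m) s))"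
    using le p by (subst ln_le_cancel_iff) auto
  moreover have "ln (2 powr (- 2 * s) * (enn2real (W n s) * enn2real (W m s))) = - 2 * s * ln 2 + bb n s + bb m s"
    unfolding bb_def using p by (simp add: ln_mult ln_powr)
  ultimately show ?thesis by (simp add: bb_def)
qed

definition P :: "real \<Rightarrow> real" where "P s = lim (\<lambda>n. bb n s / real n)"

lemma P_props: assumes s: "1/2 < s"
  shows "(\<lambda>n. bb n s / real n) \<longlonglongrightarrow> P s \<and> bb 1 s - 2 * s * ln 2 \<le> P s \<and> P s \<le> bb 1 s"
proof -
  have K: "0 \<le> 2 * s * ln 2" using s by simp
  have "convergent (\<lambda>n. bb n s / real n) \<and> bb 1 s - 2 * s * ln 2 \<le> lim (\<lambda>n. bb n s / real n) \<and> lim (\<lambda>n. bb n s / real n) \<le> bb 1 s"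
    by (rule subsuper_conv[OF bb_sub[OF s] bb_sup[OF s] K])
  then show ?thesis unfolding P_def by (simp add: convergent_LIMSEQ_iff)
qed

lemma seq_eq: assumes s: "1/2 < s" and n: "1 \<le> n"
  shows "ln_enn (partition_fun (\<lambda>z. - s * ln \<bar>gauss_deriv z\<bar> - c) n) / ereal (real n) = ereal (bb n s / real n - c)"
proof -
  define Wr where "Wr = enn2real (W n s)"
  have Wr: "W n s = ennreal Wr" "0 < Wr" using W_real[OF s, of n] unfolding Wr_def by auto
  have pf: "partition_fun (\<lambda>z. - s * ln \<bar>gauss_deriv z\<bar> - c) n = ennreal (exp (- c * real n) * Wr)"
    using partition_W[of s c n] s Wr by (simp add: ennreal_mult)
  have pos: "0 < exp (- c * real n) * Wr" using Wr by simp
  have "ln_enn (partition_fun (\<lambda>z. - s * ln \<bar>gauss_deriv z\<bar> - c) n) = ereal (- c * real n + ln Wr)"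
    unfolding pf ln_enn_def using pos Wr(2) by (simp add: ln_mult)
  moreover have "bb n s = ln Wr" unfolding bb_def Wr_def by simp
  moreover have "0 < real n" using n by simp
  ultimately show ?thesis by (simp add: field_simps)
qed

lemma pressure_eq: assumes s: "1/2 < s"
  shows "pressure (\<lambda>z. - s * ln \<bar>gauss_deriv z\<bar> - c) = ereal (P s - c)"
proof -
  have "(\<lambda>n. ereal (bb n s / real n - c)) \<longlonglongrightarrow> ereal (P s - c)"
    using P_props[OF s] by (intro tendsto_intros lim_ereal[THEN iffD2]) auto
  moreover have "\<forall>\<^sub>F n in sequentially. ereal (bb n s / real n - c) = ln_enn (partition_fun (\<lambda>z. - s * ln \<bar>gauss_deriv z\<bar> - c) n) / ereal (real n)"
    unfolding eventually_sequentially using seq_eq[OF s] by (intro exI[of _ 1]) auto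
  ultimately have "(\<lambda>n. ln_enn (partition_fun (\<lambda>z. - s * ln \<bar>gauss_deriv z\<bar> - c) n) / ereal (real n)) \<longlonglongrightarrow> ereal (P s - c)"
    by (rule Lim_transform_eventually)
  then show ?thesis unfolding pressure_def by (rule limI)
qed

lemma pressure_inf: assumes s: "0 \<le> s" "s \<le> 1/2"
  shows "pressure (\<lambda>z. - s * ln \<bar>gauss_deriv z\<bar> - c) = PInfty"
proof -
  have "\<forall>\<^sub>F n in sequentially. PInfty = ln_enn (partition_fun (\<lambda>z. - s * ln \<bar>gauss_deriv z\<bar> - c) n) / ereal (real n)"
    unfolding eventually_sequentially
  proof (intro exI[of _ 1] allI impI)
    fix n :: nat assume n: "1 \<le> n"
    have "partition_fun (\<lambda>z. - s * ln \<bar>gauss_deriv z\<bar> - c) n = top"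
      using partition_W[of s c n] W_top[OF s n] s by simp
    then show "PInfty = ln_enn (partition_fun (\<lambda>z. - s * ln \<bar>gauss_deriv z\<bar> - c) n) / ereal (real n)"
      using n unfolding ln_enn_def by simp
  qed
  then have "(\<lambda>n. ln_enn (partition_fun (\<lambda>z. - s * ln \<bar>gauss_deriv z\<bar> - c) n) / ereal (real n)) \<longlonglongrightarrow> PInfty"
    by (rule Lim_transform_eventually[OF tendsto_const])
  then show ?thesis unfolding pressure_def by (rule limI)
qed

lemma pressure_le0: assumes s: "0 \<le> s"
  shows "pressure (\<lambda>z. - s * ln \<bar>gauss_deriv z\<bar> - c) \<le> 0 \<longleftrightarrow> 1/2 < s \<and> P s \<le> c"
proof (cases "1/2 < s")
  case True then show ?thesis using pressure_eq[OF True, of c] by simp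
next
  case False then show ?thesis using pressure_inf[OF s, of c] by simp
qed



lemma young_pt:
  fixes A C x y a :: real
  assumes A: "0 < A" and C: "0 < C" and x: "0 < x" and y: "0 < y" and a: "0 \<le> a" "a \<le> 1"
  shows "x powr a * y powr (1 - a) \<le> A powr a * C powr (1 - a) * (a * (x / A) + (1 - a) * (y / C))"
proof -
  have "(x / A) powr a * (y / C) powr (1 - a) \<le> a * (x / A) + (1 - a) * (y / C)"
    using Youngs_inequality_0[of a "1 - a" "x / A" "y / C"] A C x y a by simp
  then have "A powr a * C powr (1 - a) * ((x / A) powr a * (y / C) powr (1 - a))
      \<le> A powr a * C powr (1 - a) * (a * (x / A) + (1 - a) * (y / C))"
    by (intro mult_left_mono) auto
  moreover have "A powr a * C powr (1 - a) * ((x / A) powr a * (y / C) powr (1 - a)) = x powr a * y powr (1 - a)"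
    using A C x y by (simp add: powr_divide)
  ultimately show ?thesis by simp
qed

lemma mix_gt:
  fixes s u a :: real
  assumes s: "1/2 < s" and u: "1/2 < u" and a: "0 \<le> a" "a \<le> 1"
  shows "1/2 < a * s + (1 - a) * u"
proof (cases "a = 1")
  case True then show ?thesis using s by simp
next
  case False
  then have "0 < (1 - a) * (u - 1/2)" using a u by simp
  moreover have "0 \<le> a * (s - 1/2)" using a s by simp
  moreover have "a * s + (1 - a) * u - 1/2 = a * (s - 1/2) + (1 - a) * (u - 1/2)" by (simp add: field_simps)
  ultimately show ?thesis by linarith
qed

lemma W_holder:
  assumes s: "1/2 < s" and u: "1/2 < u" and a: "0 \<le> a" "a \<le> 1"
  shows "enn2real (W n (a * s + (1 - a) * u)) \<le> enn2real (W n s) powr a * enn2real (W n u) powr (1 - a)"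
proof -
  define A where "A = enn2real (W n s)"
  define C where "C = enn2real (W n u)"
  define K where "K = A powr a * C powr (1 - a)"
  define t where "t = a * s + (1 - a) * u"
  have A: "0 < A" "W n s = ennreal A" using W_real[OF s, of n] unfolding A_def by auto
  have C: "0 < C" "W n u = ennreal C" using W_real[OF u, of n] unfolding C_def by auto
  have t: "1/2 < t"  using mix_gt[OF s u a] unfolding t_def by simp
  have K0: "0 \<le> K" unfolding K_def by simp
  have pt: "ennreal (qq w 0 powr (- 2 * t)) \<le> ennreal (K * a / A) * ennreal (qq w 0 powr (- 2 * s)) + ennreal (K * (1 - a) / C) * ennreal (qq w 0 powr (- 2 * u))"
    if w: "w \<in> words n" for w
  proof -
    have q: "0 < qq w 0" using qq0_ge1 words_pos[OF w] by fastforce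
    have "qq w 0 powr (- 2 * t) = (qq w 0 powr (- 2 * s)) powr a * (qq w 0 powr (- 2 * u)) powr (1 - a)"
      unfolding t_def using q by (simp add: powr_powr powr_add[symmetric] algebra_simps)
    also have "\<dots> \<le> K * (a * (qq w 0 powr (- 2 * s) / A) + (1 - a) * (qq w 0 powr (- 2 * u) / C))"
      unfolding K_def using q a by (intro young_pt A C) auto
    also have "\<dots> = K * a / A * qq w 0 powr (- 2 * s) + K * (1 - a) / C * qq w 0 powr (- 2 * u)"
      by (simp add: algebra_simps)
    finally have "ennreal (qq w 0 powr (- 2 * t)) \<le> ennreal (K * a / A * qq w 0 powr (- 2 * s) + K * (1 - a) / C * qq w 0 powr (- 2 * u))"
      by (rule ennreal_leI)
    also have "\<dots> = ennreal (K * a / A * qq w 0 powr (- 2 * s)) + ennreal (K * (1 - a) / C * qq w 0 powr (- 2 * u))"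
      using A C a K0 by (intro ennreal_plus) auto
    also have "\<dots> = ennreal (K * a / A) * ennreal (qq w 0 powr (- 2 * s)) + ennreal (K * (1 - a) / C) * ennreal (qq w 0 powr (- 2 * u))"
    proof -
      have e1: "ennreal (K * a / A) * ennreal (qq w 0 powr (- 2 * s)) = ennreal (K * a / A * qq w 0 powr (- 2 * s))"
        using A a K0 by (intro ennreal_mult[symmetric]) auto
      have e2: "ennreal (K * (1 - a) / C) * ennreal (qq w 0 powr (- 2 * u)) = ennreal (K * (1 - a) / C * qq w 0 powr (- 2 * u))"
        using C a K0 by (intro ennreal_mult[symmetric]) auto
      show ?thesis by (simp only: e1 e2)
    qed
    finally show ?thesis .
  qed
  have "W n t \<le> (\<integral>\<^sup>+ w. ennreal (K * a / A) * ennreal (qq w 0 powr (- 2 * s)) + ennreal (K * (1 - a) / C) * ennreal (qq w 0 powr (- 2 * u)) \<partial>count_space (words n))"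
    unfolding W_def using pt by (intro nn_integral_mono) auto
  also have "\<dots> = ennreal (K * a / A) * W n s + ennreal (K * (1 - a) / C) * W n u"
    unfolding W_def by (simp add: nn_integral_add nn_integral_cmult)
  also have "\<dots> = ennreal (K * a / A * A) + ennreal (K * (1 - a) / C * C)"
  proof -
    have e1: "ennreal (K * a / A) * ennreal A = ennreal (K * a / A * A)"
      using A a K0 by (intro ennreal_mult[symmetric]) auto
    have e2: "ennreal (K * (1 - a) / C) * ennreal C = ennreal (K * (1 - a) / C * C)"
      using C a K0 by (intro ennreal_mult[symmetric]) auto
    show ?thesis by (simp only: A(2) C(2) e1 e2)
  qed
  also have "\<dots> = ennreal (K * a / A * A + K * (1 - a) / C * C)"
    using A C a K0 by (intro ennreal_plus[symmetric]) auto
  also have "K * a / A * A + K * (1 - a) / C * C = K" using A C by (simp add: field_simps)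
  finally have "W n t \<le> ennreal K" .
  then have "enn2real (W n t) \<le> K" unfolding K_def
    by (metis enn2real_ennreal enn2real_mono ennreal_less_top powr_ge_zero mult_nonneg_nonneg)
  then show ?thesis unfolding K_def A_def C_def t_def .
qed

lemma bb_convex:
  assumes s: "1/2 < s" and u: "1/2 < u" and a: "0 \<le> a" "a \<le> 1"
  shows "bb n (a * s + (1 - a) * u) \<le> a * bb n s + (1 - a) * bb n u"
proof -
  have As: "0 < enn2real (W n s)" and Cu: "0 < enn2real (W n u)" using W_real s u by auto
  have t: "1/2 < a * s + (1 - a) * u"  using mix_gt[OF s u a] by simp
  have Wt: "0 < enn2real (W n (a * s + (1 - a) * u))" using W_real[OF t] by auto
  have "ln (enn2real (W n (a * s + (1 - a) * u))) \<le> ln (enn2real (W n s) powr a * enn2real (W n u) powr (1 - a))"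
    using W_holder[OF s u a, of n] Wt As Cu by (subst ln_le_cancel_iff) auto
  also have "\<dots> = a * ln (enn2real (W n s)) + (1 - a) * ln (enn2real (W n u))"
    using As Cu by (simp add: ln_mult ln_powr)
  finally show ?thesis unfolding bb_def .
qed

lemma P_convex_ineq:
  assumes s: "1/2 < s" and u: "1/2 < u" and a: "0 \<le> a" "a \<le> 1"
  shows "P (a * s + (1 - a) * u) \<le> a * P s + (1 - a) * P u"
proof -
  have t: "1/2 < a * s + (1 - a) * u"  using mix_gt[OF s u a] by simp
  have l1: "(\<lambda>n. bb n (a * s + (1 - a) * u) / real n) \<longlonglongrightarrow> P (a * s + (1 - a) * u)" using P_props[OF t] by simp
  have l2: "(\<lambda>n. a * (bb n s / real n) + (1 - a) * (bb n u / real n)) \<longlonglongrightarrow> a * P s + (1 - a) * P u"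
    using P_props[OF s] P_props[OF u] by (intro tendsto_intros) auto
  show ?thesis
  proof (rule LIMSEQ_le[OF l1 l2], intro exI allI impI)
    fix n :: nat assume "1 \<le> n"
    have "bb n (a * s + (1 - a) * u) / real n \<le> (a * bb n s + (1 - a) * bb n u) / real n"
      using bb_convex[OF s u a, of n] by (intro divide_right_mono) auto
    then show "bb n (a * s + (1 - a) * u) / real n \<le> a * (bb n s / real n) + (1 - a) * (bb n u / real n)"
      by (simp add: add_divide_distrib)
  qed
qed

lemma P_cont: "continuous_on {1/2<..} P"
proof (rule convex_on_continuous)
  show "convex_on {1/2<..} P"
  proof (rule convex_onI)
    fix t x y :: real assume "0 < t" "t < 1" "x \<in> {1/2<..}" "y \<in> {1/2<..}"
    then show "P ((1 - t) *\<^sub>R x + t *\<^sub>R y) \<le> (1 - t) * P x + t * P y"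
      using P_convex_ineq[of x y "1 - t"] by simp
  qed (simp add: convex_real_interval)
qed simp



lemma altsum_step:
  fixes r :: real
  shows "(\<Sum>j<Suc n. c j * r ^ j) = c 0 + r * (\<Sum>j<n. c (Suc j) * r ^ j)"
  unfolding sum.lessThan_Suc_shift by (simp add: sum_distrib_left algebra_simps)

lemma altsum:
  fixes r :: real and c :: "nat \<Rightarrow> real"
  assumes r: "-1 \<le> r" and c0: "\<And>j. 0 \<le> c j" and cd: "\<And>j. c (Suc j) \<le> c j"
  shows "0 \<le> (\<Sum>j<n. c j * r ^ j) \<and> (r \<le> 0 \<longrightarrow> (\<Sum>j<n. c j * r ^ j) \<le> c 0)"
  using c0 cd
proof (induction n arbitrary: c)
  case 0 then show ?case by simp
next
  case (Suc n)
  define T where "T = (\<Sum>j<n. c (Suc j) * r ^ j)"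
  have IH: "0 \<le> T" "r \<le> 0 \<longrightarrow> T \<le> c (Suc 0)"
    using Suc.IH[of "\<lambda>j. c (Suc j)"] Suc.prems unfolding T_def by auto
  have S: "(\<Sum>j<Suc n. c j * r ^ j) = c 0 + r * T" unfolding T_def by (rule altsum_step)
  have c1: "c (Suc 0) \<le> c 0" "0 \<le> c 0" using Suc.prems by auto
  show ?case
  proof (cases "0 \<le> r")
    case True
    then have "0 \<le> r * T" using IH by simp
    moreover have "r \<le> 0 \<longrightarrow> r * T = 0" using True by auto
    ultimately show ?thesis unfolding S using c1 by auto
  next
    case False
    then have rT: "r * T \<le> 0" using IH by (simp add: mult_nonpos_nonneg)
    have "r * c 0 \<le> r * T" using False IH c1 by (intro mult_left_mono_neg) auto
    moreover have "0 \<le> c 0 + r * c 0"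
    proof -
      have "0 \<le> (1 + r) * c 0" using r c1 by simp
      then show ?thesis by (simp add: algebra_simps)
    qed
    ultimately show ?thesis unfolding S using rT by auto
  qed
qed

lemma altsum_pos:
  fixes r :: real and c :: "nat \<Rightarrow> real"
  assumes r: "-1 \<le> r" and c0: "\<And>j. 0 \<le> c j" and cd: "\<And>j. c (Suc j) \<le> c j"
  shows "c 0 * min 1 (1 + r) \<le> (\<Sum>j<Suc n. c j * r ^ j)"
proof -
  define T where "T = (\<Sum>j<n. c (Suc j) * r ^ j)"
  have IH: "0 \<le> T" "r \<le> 0 \<longrightarrow> T \<le> c (Suc 0)"
    using altsum[OF r, of "\<lambda>j. c (Suc j)" n] c0 cd unfolding T_def by auto
  have S: "(\<Sum>j<Suc n. c j * r ^ j) = c 0 + r * T" unfolding T_def by (rule altsum_step)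
  have c1: "c (Suc 0) \<le> c 0" "0 \<le> c 0" using c0 cd by auto
  show ?thesis
  proof (cases "0 \<le> r")
    case True
    then have "0 \<le> r * T" using IH by simp
    moreover have "c 0 * min 1 (1 + r) \<le> c 0 * 1" using c1 by (intro mult_left_mono) auto
    ultimately show ?thesis unfolding S by simp
  next
    case False
    have "r * c 0 \<le> r * T" using False IH c1 by (intro mult_left_mono_neg) auto
    moreover have "min 1 (1 + r) = 1 + r" using False by simp
    ultimately show ?thesis unfolding S by (simp add: algebra_simps)
  qed
qed

definition rr :: "real \<Rightarrow> real" where "rr s = (1 - s) / s"
definition VV :: "nat \<Rightarrow> real \<Rightarrow> real" where "VV d s = (\<Sum>j<d. real (d - j) * rr s ^ j)"
definition FF :: "nat \<Rightarrow> real \<Rightarrow> real" where "FF d s = (\<Sum>j<d. 1 * rr s ^ j)"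

lemma rr_gt: "0 < s \<Longrightarrow> -1 < rr s"
  unfolding rr_def by (simp add: field_simps)

lemma VV_Suc: "VV (Suc d) s = real (Suc d) + rr s * VV d s"
  unfolding VV_def by (subst altsum_step) (simp add: Suc_diff_Suc)

lemma FF_Suc: "FF (Suc d) s = 1 + rr s * FF d s"
  unfolding FF_def by (subst altsum_step) simp

lemma VV_pos: assumes "0 < s" "1 \<le> d" shows "0 < VV d s"
proof -
  obtain k where d: "d = Suc k" using assms by (cases d) auto
  have "real d * min 1 (1 + rr s) \<le> VV d s"
    unfolding VV_def d using altsum_pos[of "rr s" "\<lambda>j. real (Suc k - j)" k] rr_gt[OF assms(1)] by simp
  moreover have "0 < real d * min 1 (1 + rr s)" using rr_gt[OF assms(1)] assms by simp
  ultimately show ?thesis by linarith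
qed

lemma FF_pos: assumes "0 < s" "1 \<le> d" shows "0 < FF d s"
proof -
  obtain k where d: "d = Suc k" using assms by (cases d) auto
  have "1 * min 1 (1 + rr s) \<le> FF d s"
    unfolding FF_def d using altsum_pos[of "rr s" "\<lambda>j. 1" k] rr_gt[OF assms(1)] by simp
  moreover have "0 < min 1 (1 + rr s)" using rr_gt[OF assms(1)] by simp
  ultimately show ?thesis by (metis mult_1 less_le_trans)
qed

lemma g_closed: assumes s: "0 < s" shows "g (Suc k) s = s / VV (Suc k) s"
proof (induction k)
  case 0 then show ?case by (simp add: VV_def)
next
  case (Suc k)
  have V: "0 < VV (Suc k) s" using VV_pos[OF s] by simp
  have V2: "0 < VV (Suc (Suc k)) s" using VV_pos[OF s] by simp
  have e: "VV (Suc (Suc k)) s = real (Suc (Suc k)) + (1 - s) / s * VV (Suc k) s"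
    using VV_Suc[of "Suc k" s] by (simp add: rr_def)
  have den: "1 - s + real (Suc (Suc k)) * (s / VV (Suc k) s) = s * VV (Suc (Suc k)) s / VV (Suc k) s"
    unfolding e using s V by (simp add: field_simps)
  show ?case
    using s V V2 by (simp only: g.simps Suc den) (simp add: field_simps)
qed

lemma f_closed: assumes s: "0 < s" shows "f (Suc k) s = s / FF (Suc k) s"
proof (induction k)
  case 0 then show ?case by (simp add: FF_def)
next
  case (Suc k)
  have V: "0 < FF (Suc k) s" using FF_pos[OF s] by simp
  have V2: "0 < FF (Suc (Suc k)) s" using FF_pos[OF s] by simp
  have e: "FF (Suc (Suc k)) s = 1 + (1 - s) / s * FF (Suc k) s"
    using FF_Suc[of "Suc k" s] by (simp add: rr_def)
  have den: "1 - s + s / FF (Suc k) s = s * FF (Suc (Suc k)) s / FF (Suc k) s"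
    unfolding e using s V by (simp add: field_simps)
  show ?case
    using s V V2 by (simp only: f.simps Suc den) (simp add: field_simps)
qed

lemma g_eq: "0 < s \<Longrightarrow> 1 \<le> d \<Longrightarrow> g d s = s / VV d s"
  using g_closed[of s "d - 1"] by simp

lemma f_eq: "0 < s \<Longrightarrow> 1 \<le> d \<Longrightarrow> f d s = s / FF d s"
  using f_closed[of s "d - 1"] by simp

lemma g_lt_f: assumes s: "0 < s" and d: "2 \<le> d" shows "g d s < f d s"
proof -
  obtain k where dk: "d = Suc k" using d by (cases d) auto
  have "VV d s - FF d s = (\<Sum>j<d. real (d - Suc j) * rr s ^ j)"
    unfolding VV_def FF_def by (simp add: sum_subtractf[symmetric] of_nat_diff algebra_simps Suc_diff_Suc)
  also have "real (d - Suc 0) * min 1 (1 + rr s) \<le> \<dots>"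
    unfolding dk using altsum_pos[of "rr s" "\<lambda>j. real (Suc k - Suc j)" k] rr_gt[OF s] by simp
  finally have "real (d - 1) * min 1 (1 + rr s) \<le> VV d s - FF d s" by simp
  moreover have "0 < real (d - 1) * min 1 (1 + rr s)" using d rr_gt[OF s] by simp
  ultimately have "FF d s < VV d s" by linarith
  moreover have "0 < FF d s" using FF_pos[OF s] d by simp
  ultimately show ?thesis using g_eq[OF s] f_eq[OF s] d s by (simp add: frac_less2)
qed

lemma g_le_f: assumes s: "0 < s" and d: "1 \<le> d" shows "g d s \<le> (real d + 1) / 2 * f d s"
proof -
  obtain k where dk: "d = Suc k" using d by (cases d) auto
  have "(real d + 1) * VV d s - 2 * FF d s = (\<Sum>j<d. real ((d + 1) * (d - j) - 2) * rr s ^ j)"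
  proof -
    have "(real d + 1) * VV d s - 2 * FF d s = (\<Sum>j<d. ((real d + 1) * real (d - j) - 2) * rr s ^ j)"
      unfolding VV_def FF_def by (simp add: sum_distrib_left sum_subtractf[symmetric] algebra_simps)
    also have "\<dots> = (\<Sum>j<d. real ((d + 1) * (d - j) - 2) * rr s ^ j)"
    proof (rule sum.cong)
      fix j assume "j \<in> {..<d}"
      then have "1 \<le> d - j" by simp
      then have "(d + 1) * 1 \<le> (d + 1) * (d - j)" by (rule mult_le_mono2)
      then have "2 \<le> (d + 1) * (d - j)" using d by simp
      then have "real ((d + 1) * (d - j) - 2) = real ((d + 1) * (d - j)) - 2"
        by (simp add: of_nat_diff)
      also have "\<dots> = (real d + 1) * real (d - j) - 2" by (simp only: of_nat_mult of_nat_add of_nat_1)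
      finally have eq: "real ((d + 1) * (d - j) - 2) = (real d + 1) * real (d - j) - 2" .
      show "((real d + 1) * real (d - j) - 2) * rr s ^ j = real ((d + 1) * (d - j) - 2) * rr s ^ j" by (simp only: eq)
    qed simp
    finally show ?thesis .
  qed
  also have "0 \<le> \<dots>"
  proof -
    have mono: "real ((d + 1) * (d - Suc j) - 2) \<le> real ((d + 1) * (d - j) - 2)" for j
    proof -
      have "d - Suc j \<le> d - j" by (rule diff_le_mono2) simp
      then have "(d + 1) * (d - Suc j) \<le> (d + 1) * (d - j)" by (rule mult_le_mono2)
      then have "(d + 1) * (d - Suc j) - 2 \<le> (d + 1) * (d - j) - 2" by (rule diff_le_mono)
      then show ?thesis by (simp only: of_nat_le_iff)
    qed
    have "-1 \<le> rr s" using rr_gt[OF s] by simp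
    from altsum[OF this, of "\<lambda>j. real ((d + 1) * (d - j) - 2)" d, OF of_nat_0_le_iff mono]
    show ?thesis by blast
  qed
  finally have le: "2 * FF d s \<le> (real d + 1) * VV d s" by simp
  have V: "0 < VV d s" and F: "0 < FF d s" using VV_pos[OF s d] FF_pos[OF s d] by auto
  have m: "s * (2 * FF d s) \<le> s * ((real d + 1) * VV d s)" using le s by (intro mult_left_mono) auto
  have "s / VV d s \<le> (real d + 1) / 2 * (s / FF d s)"
    using V F s by (simp add: field_simps) (use m in \<open>simp add: algebra_simps\<close>)
  then show ?thesis using g_eq[OF s d] f_eq[OF s d] by simp
qed

lemma g_le_s: assumes s: "0 < s" "s \<le> 1" and d: "1 \<le> d" shows "g d s \<le> s"
proof -
  obtain k where dk: "d = Suc k" using d by (cases d) auto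
  have r: "0 \<le> rr s" using s unfolding rr_def by simp
  have "real d * min 1 (1 + rr s) \<le> VV d s"
    unfolding VV_def dk using altsum_pos[of "rr s" "\<lambda>j. real (Suc k - j)" k] rr_gt[OF s(1)] by simp
  then have "1 \<le> VV d s" using r d by simp
  then show ?thesis using g_eq[OF s(1) d] s by (simp add: divide_le_eq)
qed

lemma g_ge: assumes s: "1 \<le> s" and d: "1 \<le> d" shows "s / real d \<le> g d s"
proof -
  have s0: "0 < s" using s by simp
  have r: "rr s \<le> 0" using s unfolding rr_def by (simp add: divide_nonpos_pos)
  have "VV d s \<le> real (d - 0)"
    unfolding VV_def using altsum[of "rr s" "\<lambda>j. real (d - j)" d] rr_gt[OF s0] r by simp
  then have "VV d s \<le> real d" by simp
  moreover have "0 < VV d s" using VV_pos[OF s0 d] .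
  ultimately show ?thesis using g_eq[OF s0 d] s0 by (simp add: frac_le)
qed

lemma g_pos: "0 < s \<Longrightarrow> 1 \<le> d \<Longrightarrow> 0 < g d s"
  using g_eq VV_pos by simp

lemma VV_cont: "continuous_on {0<..} (VV d)"
  unfolding VV_def rr_def by (intro continuous_intros) auto

lemma FF_cont: "continuous_on {0<..} (FF d)"
  unfolding FF_def rr_def by (intro continuous_intros) auto

lemma g_cont: assumes d: "1 \<le> d" shows "continuous_on {0<..} (g d)"
proof -
  have "continuous_on {0<..} (\<lambda>s. s / VV d s)"
    using VV_pos[OF _ d] by (intro continuous_intros VV_cont) force
  then show ?thesis by (rule continuous_on_cong[THEN iffD1, rotated 2]) (auto simp: g_eq[OF _ d])
qed

lemma f_cont: assumes d: "1 \<le> d" shows "continuous_on {0<..} (f d)"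
proof -
  have "continuous_on {0<..} (\<lambda>s. s / FF d s)"
    using FF_pos[OF _ d] by (intro continuous_intros FF_cont) force
  then show ?thesis by (rule continuous_on_cong[THEN iffD1, rotated 2]) (auto simp: f_eq[OF _ d])
qed



lemma Lam_eq: "{s. 0 \<le> s \<and> pressure (\<lambda>x. - s * ln \<bar>gauss_deriv x\<bar> - g d s * ln B) \<le> 0}
   = {s. 1/2 < s \<and> P s \<le> g d s * ln B}"
  using pressure_le0 by force

lemma Theta_eq: "{s. 0 \<le> s \<and> pressure (\<lambda>x. - f d s * ln B - s * ln \<bar>gauss_deriv x\<bar>) \<le> 0}
   = {s. 1/2 < s \<and> P s \<le> f d s * ln B}"
proof -
  have "(\<lambda>x. - f d s * ln B - s * ln \<bar>gauss_deriv x\<bar>) = (\<lambda>x. - s * ln \<bar>gauss_deriv x\<bar> - f d s * ln B)" for s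
    by (rule ext) (simp add: algebra_simps)
  then show ?thesis using pressure_le0 by force
qed

lemma W1_mono: assumes "1 \<le> s" shows "W 1 s \<le> W 1 1"
  unfolding W_1
proof (rule suminf_le)
  fix k
  have "real (Suc k) powr (- 2 * s) \<le> real (Suc k) powr (- 2 * 1)"
    using assms by (intro powr_mono) auto
  then show "ennreal (real (Suc k) powr (- 2 * s)) \<le> ennreal (real (Suc k) powr (- 2 * 1))"
    by (rule ennreal_leI)
qed auto

lemma P_le_C: assumes "1 \<le> s" shows "P s \<le> bb 1 1"
proof -
  have s: "1/2 < s" using assms by simp
  have "enn2real (W 1 s) \<le> enn2real (W 1 1)"
    using W1_mono[OF assms] W_fin[of 1 1] by (intro enn2real_mono) auto
  then have "bb 1 s \<le> bb 1 1" unfolding bb_def using W_real[OF s, of 1] by simp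
  then show ?thesis using P_props[OF s] by simp
qed

lemma Lam_nonempty:
  assumes B: "1 < B" and d: "1 \<le> d"
  shows "\<exists>s. 1/2 < s \<and> P s \<le> g d s * ln B"
proof -
  define C where "C = bb 1 1"
  define s where "s = 1 + real d * \<bar>C\<bar> / ln B"
  have L: "0 < ln B" using B by simp
  have s1: "1 \<le> s" unfolding s_def using L by simp
  have "s / real d \<le> g d s" by (rule g_ge[OF s1 d])
  then have "s / real d * ln B \<le> g d s * ln B" using L by (intro mult_right_mono) auto
  moreover have "s / real d * ln B = ln B / real d + \<bar>C\<bar>"
    unfolding s_def using L d by (simp add: field_simps)
  moreover have "0 < ln B / real d" using L d by simp
  moreover have "P s \<le> C" unfolding C_def by (rule P_le_C[OF s1])
  ultimately have "P s \<le> g d s * ln B" by linarith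
  then show ?thesis using s1 by (intro exI[of _ s]) auto
qed

theorem part2:
  assumes B: "1 < B" and d: "1 \<le> d"
  shows "lambda_d d B \<ge> theta_d d (B powr ((real d + 1) / 2))"
proof -
  let ?L = "{s. 1/2 < s \<and> P s \<le> g d s * ln B}"
  let ?T = "{s. 1/2 < s \<and> P s \<le> f d s * ln (B powr ((real d + 1) / 2))}"
  have L: "0 < ln B" using B by simp
  have sub: "?L \<subseteq> ?T"
  proof
    fix s assume "s \<in> ?L"
    then have s: "1/2 < s" "P s \<le> g d s * ln B" by auto
    have "g d s * ln B \<le> (real d + 1) / 2 * f d s * ln B"
      using g_le_f[of s d] s d L by (intro mult_right_mono) auto
    also have "\<dots> = f d s * ln (B powr ((real d + 1) / 2))"
      using B by (simp add: ln_powr)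
    finally show "s \<in> ?T" using s by simp
  qed
  have ne: "?L \<noteq> {}" using Lam_nonempty[OF B d] by auto
  have bdd: "bdd_below ?T" by (rule bdd_belowI[of _ "1/2"]) auto
  have "Inf ?T \<le> Inf ?L" by (rule cInf_superset_mono[OF ne bdd sub])
  then show ?thesis unfolding lambda_d_def theta_d_def Lam_eq Theta_eq .
qed

lemma sum_harm: "(\<Sum>k<N. real (Suc k) powr (- 2 * (1/2))) = harm N"
  unfolding harm_altdef by (intro sum.cong) (auto simp: powr_minus)

lemma delta_bound:
  assumes B: "1 < B" and d: "1 \<le> d"
  shows "\<exists>\<delta>>0. \<forall>s. 1/2 < s \<and> P s \<le> g d s * ln B \<longrightarrow> 1/2 + \<delta> \<le> s"
proof -
  define M where "M = ln B + 2 * ln 2"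
  define N where "N = nat \<lceil>exp (exp M + 1)\<rceil>"
  define h where "h = (\<lambda>s. (\<Sum>k<N. real (Suc k) powr (- 2 * s)))"
  have L: "0 < ln B" using B by simp
  have hN: "exp M < h (1/2)"
  proof -
    have "exp (exp M + 1) \<le> real N" unfolding N_def by linarith
    then have "exp M + 1 \<le> ln (real N)"
      by (metis exp_gt_zero ln_exp ln_le_cancel_iff order_less_le_trans)
    also have "\<dots> < ln (real N + 1)"
    proof -
      have "0 < real N" using \<open>exp (exp M + 1) \<le> real N\<close> by (rule order_less_le_trans[OF exp_gt_zero])
      then show ?thesis by simp
    qed
    also have "\<dots> \<le> harm N" by (rule ln_le_harm)
    finally show ?thesis unfolding h_def sum_harm by simp
  qed
  have "isCont (\<lambda>s. h s - exp M) (1/2)" unfolding h_def by (intro continuous_intros) auto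
  then have "(\<lambda>s. h s - exp M) \<midarrow>1/2\<rightarrow> h (1/2) - exp M" by (simp add: isCont_def)
  from LIM_fun_gt_zero[OF this] hN obtain r where r: "0 < r" "\<And>x. x \<noteq> 1/2 \<and> \<bar>1/2 - x\<bar> < r \<Longrightarrow> 0 < h x - exp M"
    by auto
  define \<delta> where "\<delta> = min r (1/2)"
  have "\<forall>s. 1/2 < s \<and> P s \<le> g d s * ln B \<longrightarrow> 1/2 + \<delta> \<le> s"
  proof (intro allI impI)
    fix s assume hs: "1/2 < s \<and> P s \<le> g d s * ln B"
    show "1/2 + \<delta> \<le> s"
    proof (rule ccontr)
      assume "\<not> 1/2 + \<delta> \<le> s"
      then have s1: "s < 1/2 + \<delta>" by simp
      then have sle: "s \<le> 1" "\<bar>1/2 - s\<bar> < r" "s \<noteq> 1/2" using hs unfolding \<delta>_def by auto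
      have hs2: "exp M < h s" using r(2)[of s] sle by auto
      have sp: "1/2 < s" using hs by simp
      have "(\<Sum>k<N. ennreal (real (Suc k) powr (- 2 * s))) \<le> W 1 s"
        unfolding W_1 by (rule sum_le_suminf) auto
      then have "ennreal (h s) \<le> W 1 s" unfolding h_def by simp
      then have "h s \<le> enn2real (W 1 s)"
        using W_real[OF sp, of 1] by (metis ennreal_le_iff enn2real_nonneg)
      then have "ln (h s) \<le> bb 1 s"
      proof -
        have hp: "0 < h s" using hs2 by (rule order_less_trans[OF exp_gt_zero])
        then have "0 < enn2real (W 1 s)" using \<open>h s \<le> enn2real (W 1 s)\<close> by linarith
        then show ?thesis using hp \<open>h s \<le> enn2real (W 1 s)\<close> by (simp add: bb_def)
      qed
      moreover have "M < ln (h s)" using hs2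
        by (metis exp_gt_zero ln_exp ln_less_cancel_iff order_less_trans)
      moreover have "bb 1 s - 2 * s * ln 2 \<le> P s" using P_props[OF sp] by simp
      moreover have "g d s \<le> s" by (rule g_le_s[OF _ sle(1) d]) (use sp in simp)
      moreover have "g d s * ln B \<le> 1 * ln B" using \<open>g d s \<le> s\<close> sle L by (intro mult_right_mono) auto
      moreover have "2 * s * ln 2 \<le> 2 * 1 * ln 2" using sle by (intro mult_right_mono) auto
      ultimately show False using hs unfolding M_def by linarith
    qed
  qed
  moreover have "0 < \<delta>" unfolding \<delta>_def using r by simp
  ultimately show ?thesis by blast
qed

theorem part1:
  assumes B: "1 < B" and d: "2 \<le> d"
  shows "lambda_d d B > theta_d d B"
proof -
  let ?L = "{s. 1/2 < s \<and> P s \<le> g d s * ln B}"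
  let ?T = "{s. 1/2 < s \<and> P s \<le> f d s * ln B}"
  have d1: "1 \<le> d" using d by simp
  have L: "0 < ln B" using B by simp
  define lam where "lam = Inf ?L"
  have ne: "?L \<noteq> {}" using Lam_nonempty[OF B d1] by auto
  have bddL: "bdd_below ?L" by (rule bdd_belowI[of _ "1/2"]) auto
  have bddT: "bdd_below ?T" by (rule bdd_belowI[of _ "1/2"]) auto
  obtain \<delta> where \<delta>: "0 < \<delta>" "\<And>s. s \<in> ?L \<Longrightarrow> 1/2 + \<delta> \<le> s" using delta_bound[OF B d1] by auto
  have lam_ge: "1/2 + \<delta> \<le> lam" unfolding lam_def using ne \<delta>(2) by (intro cInf_greatest) auto
  then have lam_in: "lam \<in> {1/2<..}" using \<delta> by simp
  have contF: "continuous_on {1/2<..} (\<lambda>s. P s - g d s * ln B)"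
    using P_cont g_cont[OF d1] by (intro continuous_intros) (auto elim: continuous_on_subset)
  have contG: "continuous_on {1/2<..} (\<lambda>s. P s - f d s * ln B)"
    using P_cont f_cont[OF d1] by (intro continuous_intros) (auto elim: continuous_on_subset)
  have cF: "isCont (\<lambda>s. P s - g d s * ln B) lam"
    using continuous_on_eq_continuous_at[OF open_greaterThan, of "1/2::real"] contF lam_in by blast
  have cG: "isCont (\<lambda>s. P s - f d s * ln B) lam"
    using continuous_on_eq_continuous_at[OF open_greaterThan, of "1/2::real"] contG lam_in by blast
  have Flam: "P lam - g d lam * ln B \<le> 0"
  proof (rule ccontr)
    assume "\<not> P lam - g d lam * ln B \<le> 0"
    then have pos: "0 < P lam - g d lam * ln B" by simp
    have "(\<lambda>s. P s - g d s * ln B) \<midarrow>lam\<rightarrow> P lam - g d lam * ln B" using cF by (simp add: isCont_def)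
    from LIM_fun_gt_zero[OF this pos] obtain r where r: "0 < r" "\<And>x. x \<noteq> lam \<and> \<bar>lam - x\<bar> < r \<Longrightarrow> 0 < P x - g d x * ln B"
      by auto
    have "Inf ?L < lam + r" using r unfolding lam_def by simp
    then obtain s where s: "s \<in> ?L" "s < lam + r" using cInf_lessD[OF ne] by blast
    have "lam \<le> s" unfolding lam_def using s(1) bddL by (rule cInf_lower)
    show False
    proof (cases "s = lam")
      case True then show False using s pos by simp
    next
      case False
      then have "0 < P s - g d s * ln B" using r(2)[of s] \<open>lam \<le> s\<close> s(2) by auto
      then show False using s(1) by simp
    qed
  qed
  have "g d lam < f d lam" using g_lt_f[OF _ d] lam_in by simp
  then have "g d lam * ln B < f d lam * ln B" using L by simp
  then have neg: "P lam - f d lam * ln B < 0" using Flam by linarith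
  have "(\<lambda>s. P s - f d s * ln B) \<midarrow>lam\<rightarrow> P lam - f d lam * ln B" using cG by (simp add: isCont_def)
  from LIM_fun_less_zero[OF this neg] obtain r where r: "0 < r" "\<And>x. x \<noteq> lam \<and> \<bar>lam - x\<bar> < r \<Longrightarrow> P x - f d x * ln B < 0"
    by auto
  define t where "t = lam - min (r/2) (\<delta>/2)"
  have t: "t \<noteq> lam" "\<bar>lam - t\<bar> < r" "1/2 < t" "t < lam"
    unfolding t_def using r \<delta> lam_ge by auto
  then have "t \<in> ?T" using r(2)[of t] by auto
  then have "Inf ?T \<le> t" using bddT by (rule cInf_lower)
  then have "Inf ?T < Inf ?L" using t unfolding lam_def by simp
  then show ?thesis unfolding lambda_d_def theta_d_def Lam_eq Theta_eq .
qed

theorem mainTheorem12: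
  fixes B :: real
  assumes "1 < B"
  shows "(\<forall>d::nat. 2 \<le> d \<longrightarrow> lambda_d d B > theta_d d B) \<and>
         (\<forall>d::nat. 1 \<le> d \<longrightarrow> lambda_d d B \<ge> theta_d d (B powr ((real d + 1) / 2)))"
  using part1[OF assms] part2[OF assms] by blast


end
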